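(* Fix $k\ge 2$, $\epsilon>0$ and a graphlet $\mathsf{G}$ on $k$ vertices. For a graph $G$ on $n$ nodes, the number of pairs $(\mathcal{W},\mathcal{W}')\in\mathcal{D}\times\mathcal{D}$ such that $\mathrm{Cov}\big(\tilde W(\mathcal{W},\mathsf{G}),\tilde W(\mathcal{W}',\mathsf{G})\big)>0$ is $O(n^{2k-2})$ (with the implied constant depending only on $k$).
   Context: Let $G=(V,E)$ be a simple undirected graph with $V=\{v_1,\dots,v_n\}$, $a_{i,j}=1$ iff $\{v_i,v_j\}\in E$. A graphlet is a simple graph $\mathsf{G}=(\mathsf{V},\mathsf{E})$, $\mathsf{V}=\{u_1,\dots,u_k\}$. Independently for each ordered pair $(i,j)$, $i\ne j$, let $\tilde a_{i,j}$ be a bit with $\Pr[\tilde a_{i,j}=1]=e^{\epsilon}/(1+e^{\epsilon})$ if $a_{i,j}=1$ and $1/(1+e^{\epsilon})$ if $a_{i,j}=0$, and set $\hat a_{i,j}=\frac{e^{\epsilon}+1}{e^{\epsilon}-1}\tilde a_{i,j}-\frac{1}{e^{\epsilon}-1}$. $\mathcal{D}$ is the set of tuples $\mathcal{W}=(v_{\ell_1},\dots,v_{\ell_k})\in V^k$ of pairwise distinct nodes, and $\tilde W(\mathcal{W},\mathsf{G})=\prod_{\{u_i,u_j\}\in\mathsf{E},\,i<j}\hat a_{\ell_i,\ell_j}$. *)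

theory Defs
  imports "HOL-Probability.Probability"
begin

definition simple_graph_on :: "nat \<Rightarrow> (nat \<Rightarrow> nat \<Rightarrow> bool) \<Rightarrow> bool" where
  "simple_graph_on n a \<longleftrightarrow> (\<forall>i<n. \<forall>j<n. a i j = a j i) \<and> (\<forall>i<n. \<not> a i i)"

definition ord_pairs :: "nat \<Rightarrow> (nat \<times> nat) set" where
  "ord_pairs n = {(i,j). i < n \<and> j < n \<and> i \<noteq> j}"

text \<open>Randomized response: independent bits tilde-a_{i,j} for each ordered pair.\<close>
definition rr_pmf :: "real \<Rightarrow> nat \<Rightarrow> (nat \<Rightarrow> nat \<Rightarrow> bool) \<Rightarrow> (nat \<times> nat \<Rightarrow> bool) pmf" where
  "rr_pmf \<epsilon> n a = Pi_pmf (ord_pairs n) False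
     (\<lambda>(i,j). bernoulli_pmf (if a i j then exp \<epsilon> / (1 + exp \<epsilon>) else 1 / (1 + exp \<epsilon>)))"

text \<open>Unbiased estimator hat-a_{i,j} computed from the outcome \<omega>.\<close>
definition a_hat :: "real \<Rightarrow> (nat \<times> nat \<Rightarrow> bool) \<Rightarrow> nat \<Rightarrow> nat \<Rightarrow> real" where
  "a_hat \<epsilon> \<omega> i j = (exp \<epsilon> + 1) / (exp \<epsilon> - 1) * (if \<omega> (i,j) then 1 else 0) - 1 / (exp \<epsilon> - 1)"

text \<open>Tuples of k pairwise distinct nodes of G (W ! i = index of v_{l_{i+1}}).\<close>
definition tuples_D :: "nat \<Rightarrow> nat \<Rightarrow> nat list set" where
  "tuples_D n k = {W. length W = k \<and> distinct W \<and> set W \<subseteq> {..<n}}"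

text \<open>tilde-W(W, graphlet): product over graphlet edges {u_i,u_j}, i<j, of hat-a_{l_i,l_j}.
  The graphlet is a simple graph on {0..<k} with adjacency E.\<close>
definition W_tilde :: "real \<Rightarrow> (nat \<Rightarrow> nat \<Rightarrow> bool) \<Rightarrow> nat \<Rightarrow> nat list \<Rightarrow> (nat \<times> nat \<Rightarrow> bool) \<Rightarrow> real" where
  "W_tilde \<epsilon> E k W \<omega> = (\<Prod>(i,j)\<in>{(i,j). i < j \<and> j < k \<and> E i j}. a_hat \<epsilon> \<omega> (W ! i) (W ! j))"

definition cov_pmf :: "'a pmf \<Rightarrow> ('a \<Rightarrow> real) \<Rightarrow> ('a \<Rightarrow> real) \<Rightarrow> real" where
  "cov_pmf M X Y = measure_pmf.expectation M (\<lambda>\<omega>. X \<omega> * Y \<omega>)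
      - measure_pmf.expectation M X * measure_pmf.expectation M Y"

end

theory Submission imports Defs begin

lemma finite_set_Pi_pmf_bool:
  fixes p :: "'a \<Rightarrow> bool pmf"
  assumes "finite S"
  shows "finite (set_pmf (Pi_pmf S False p))"
proof -
  have "set_pmf (Pi_pmf S False p) \<subseteq> (\<lambda>B x. x \<in> B) ` Pow S"
  proof
    fix f assume "f \<in> set_pmf (Pi_pmf S False p)"
    then have "\<forall>x. x \<notin> S \<longrightarrow> f x = False" using set_Pi_pmf_subset[OF assms, of False p] by blast
    then have "f = (\<lambda>x. x \<in> {x. f x})" "{x. f x} \<subseteq> S" by auto
    then show "f \<in> (\<lambda>B x. x \<in> B) ` Pow S" by blast
  qed
  then show ?thesis using assms by (meson finite_Pow_iff finite_imageI finite_subset)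
qed

lemma pmf_pair': "pmf (pair_pmf p q) z = pmf p (fst z) * pmf q (snd z)"
  by (cases z) (simp add: pmf_pair)

lemma expectation_pair_prod:
  fixes f :: "'a \<Rightarrow> real" and g :: "'b \<Rightarrow> real"
  assumes "finite (set_pmf p)" "finite (set_pmf q)"
  shows "measure_pmf.expectation (pair_pmf p q) (\<lambda>z. f (fst z) * g (snd z))
     = measure_pmf.expectation p f * measure_pmf.expectation q g"
proof -
  have "measure_pmf.expectation (pair_pmf p q) (\<lambda>z. f (fst z) * g (snd z))
      = (\<Sum>z\<in>set_pmf p \<times> set_pmf q. f (fst z) * g (snd z) * pmf (pair_pmf p q) z)"
    by (rule integral_measure_pmf_real) (use assms in auto)
  also have "\<dots> = (\<Sum>a\<in>set_pmf p. \<Sum>b\<in>set_pmf q. (f a * pmf p a) * (g b * pmf q b))"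
    by (auto simp: sum.cartesian_product case_prod_unfold pmf_pair' mult_ac intro!: sum.cong)
  also have "\<dots> = (\<Sum>a\<in>set_pmf p. f a * pmf p a) * (\<Sum>b\<in>set_pmf q. g b * pmf q b)"
    by (simp add: sum_product)
  also have "(\<Sum>a\<in>set_pmf p. f a * pmf p a) = measure_pmf.expectation p f"
    by (rule integral_measure_pmf_real[symmetric]) (use assms in auto)
  also have "(\<Sum>b\<in>set_pmf q. g b * pmf q b) = measure_pmf.expectation q g"
    by (rule integral_measure_pmf_real[symmetric]) (use assms in auto)
  finally show ?thesis .
qed

lemma expectation_Pi_pmf_restrict:
  fixes p :: "'a \<Rightarrow> bool pmf" and F :: "('a \<Rightarrow> bool) \<Rightarrow> real"
  assumes "finite A" "B \<subseteq> A" "\<And>\<omega> \<omega>'. (\<And>x. x \<in> B \<Longrightarrow> \<omega> x = \<omega>' x) \<Longrightarrow> F \<omega> = F \<omega>'"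
  shows "measure_pmf.expectation (Pi_pmf A False p) F = measure_pmf.expectation (Pi_pmf B False p) F"
proof -
  have "measure_pmf.expectation (Pi_pmf B False p) F
     = measure_pmf.expectation (map_pmf (\<lambda>f x. if x \<in> B then f x else False) (Pi_pmf A False p)) F"
    by (subst Pi_pmf_subset[OF assms(1,2)]) (rule refl)
  also have "\<dots> = measure_pmf.expectation (Pi_pmf A False p) F"
    apply (simp only: integral_map_pmf)
    apply (intro Bochner_Integration.integral_cong refl assms(3))
    by auto
  finally show ?thesis ..
qed

lemma indep_prod:
  fixes p :: "'a \<Rightarrow> bool pmf" and h :: "bool \<Rightarrow> real"
  assumes "finite A" "S \<subseteq> A" "T \<subseteq> A" "S \<inter> T = {}"
  shows "measure_pmf.expectation (Pi_pmf A False p) (\<lambda>\<omega>. (\<Prod>x\<in>S. h (\<omega> x)) * (\<Prod>x\<in>T. h (\<omega> x)))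
    = measure_pmf.expectation (Pi_pmf A False p) (\<lambda>\<omega>. \<Prod>x\<in>S. h (\<omega> x)) *
      measure_pmf.expectation (Pi_pmf A False p) (\<lambda>\<omega>. \<Prod>x\<in>T. h (\<omega> x))"
proof -
  have fS: "finite S" using assms(1,2) by (meson finite_subset)
  have fT: "finite T" using assms(1,3) by (meson finite_subset)
  have "measure_pmf.expectation (Pi_pmf A False p) (\<lambda>\<omega>. (\<Prod>x\<in>S. h (\<omega> x)) * (\<Prod>x\<in>T. h (\<omega> x)))
      = measure_pmf.expectation (Pi_pmf (S \<union> T) False p) (\<lambda>\<omega>. (\<Prod>x\<in>S. h (\<omega> x)) * (\<Prod>x\<in>T. h (\<omega> x)))"
    by (rule expectation_Pi_pmf_restrict) (use assms in auto)
  also have "\<dots> = measure_pmf.expectation (pair_pmf (Pi_pmf S False p) (Pi_pmf T False p))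
       (\<lambda>z. (\<Prod>x\<in>S. h (fst z x)) * (\<Prod>x\<in>T. h (snd z x)))"
  proof -
    have "\<And>f g. (\<Prod>x\<in>T. h (if x \<in> S then f x else g x)) = (\<Prod>x\<in>T. h (g x))"
      using assms(4) by (intro prod.cong) auto
    then show ?thesis
      by (subst Pi_pmf_union[OF fS fT assms(4)]) (simp add: case_prod_unfold)
  qed
  also have "\<dots> = measure_pmf.expectation (Pi_pmf S False p) (\<lambda>f. \<Prod>x\<in>S. h (f x)) *
      measure_pmf.expectation (Pi_pmf T False p) (\<lambda>f. \<Prod>x\<in>T. h (f x))"
    by (rule expectation_pair_prod) (auto intro: finite_set_Pi_pmf_bool fS fT)
  also have "measure_pmf.expectation (Pi_pmf S False p) (\<lambda>f. \<Prod>x\<in>S. h (f x))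
     = measure_pmf.expectation (Pi_pmf A False p) (\<lambda>f. \<Prod>x\<in>S. h (f x))"
    by (rule expectation_Pi_pmf_restrict[symmetric]) (use assms in auto)
  also have "measure_pmf.expectation (Pi_pmf T False p) (\<lambda>f. \<Prod>x\<in>T. h (f x))
     = measure_pmf.expectation (Pi_pmf A False p) (\<lambda>f. \<Prod>x\<in>T. h (f x))"
    by (rule expectation_Pi_pmf_restrict[symmetric]) (use assms in auto)
  finally show ?thesis .
qed


definition hh :: "real \<Rightarrow> bool \<Rightarrow> real" where
  "hh \<epsilon> b = (exp \<epsilon> + 1) / (exp \<epsilon> - 1) * (if b then 1 else 0) - 1 / (exp \<epsilon> - 1)"

definition Ed :: "(nat \<Rightarrow> nat \<Rightarrow> bool) \<Rightarrow> nat \<Rightarrow> (nat \<times> nat) set" where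
  "Ed E k = {(i,j). i < j \<and> j < k \<and> E i j}"

definition SW :: "(nat \<Rightarrow> nat \<Rightarrow> bool) \<Rightarrow> nat \<Rightarrow> nat list \<Rightarrow> (nat \<times> nat) set" where
  "SW E k W = (\<lambda>(i,j). (W!i, W!j)) ` Ed E k"

lemma finite_Ed: "finite (Ed E k)"
proof -
  have "Ed E k \<subseteq> {..<k} \<times> {..<k}" unfolding Ed_def by auto
  then show ?thesis by (rule finite_subset) auto
qed

lemma W_tilde_eq:
  assumes "W \<in> tuples_D n k"
  shows "W_tilde \<epsilon> E k W = (\<lambda>\<omega>. \<Prod>x\<in>SW E k W. hh \<epsilon> (\<omega> x))"
proof
  fix \<omega>
  have len: "length W = k" and dist: "distinct W" using assms unfolding tuples_D_def by auto
  have inj: "inj_on (\<lambda>(i,j). (W!i, W!j)) (Ed E k)"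
  proof (rule inj_onI, clarify)
    fix i j i' j' assume "(i,j) \<in> Ed E k" "(i',j') \<in> Ed E k" "W!i = W!i'" "W!j = W!j'"
    then show "i = i' \<and> j = j'" using len dist unfolding Ed_def by (auto simp: nth_eq_iff_index_eq)
  qed
  have "(\<Prod>x\<in>SW E k W. hh \<epsilon> (\<omega> x)) = (\<Prod>x\<in>Ed E k. hh \<epsilon> (\<omega> ((\<lambda>(i,j). (W!i, W!j)) x)))"
    unfolding SW_def by (subst prod.reindex[OF inj]) (simp add: comp_def)
  also have "\<dots> = W_tilde \<epsilon> E k W \<omega>"
    unfolding W_tilde_def Ed_def a_hat_def hh_def by (intro prod.cong refl) auto
  finally show "W_tilde \<epsilon> E k W \<omega> = (\<Prod>x\<in>SW E k W. hh \<epsilon> (\<omega> x))" ..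
qed

lemma SW_sub:
  assumes "W \<in> tuples_D n k"
  shows "SW E k W \<subseteq> ord_pairs n"
proof -
  have len: "length W = k" and dist: "distinct W" and st: "set W \<subseteq> {..<n}"
    using assms unfolding tuples_D_def by auto
  show ?thesis
  proof (clarsimp simp: SW_def Ed_def ord_pairs_def)
    fix i j assume "i < j" "j < k"
    then show "W!i < n \<and> W!j < n \<and> W!i \<noteq> W!j" using len dist st
      by (auto simp: nth_eq_iff_index_eq) (meson in_mono lessThan_iff nth_mem order.strict_trans)+
  qed
qed

lemma finite_ord_pairs: "finite (ord_pairs n)"
proof -
  have "ord_pairs n \<subseteq> {..<n} \<times> {..<n}" unfolding ord_pairs_def by auto
  then show ?thesis by (rule finite_subset) auto
qed

lemma cov_zero:
  assumes "W \<in> tuples_D n k" "W' \<in> tuples_D n k" "SW E k W \<inter> SW E k W' = {}"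
  shows "cov_pmf (rr_pmf \<epsilon> n a) (W_tilde \<epsilon> E k W) (W_tilde \<epsilon> E k W') = 0"
  unfolding cov_pmf_def W_tilde_eq[OF assms(1)] W_tilde_eq[OF assms(2)] rr_pmf_def
  by (subst indep_prod[OF finite_ord_pairs SW_sub[OF assms(1)] SW_sub[OF assms(2)] assms(3)]) simp

lemma cov_pos_share:
  assumes "W \<in> tuples_D n k" "W' \<in> tuples_D n k"
    "cov_pmf (rr_pmf \<epsilon> n a) (W_tilde \<epsilon> E k W) (W_tilde \<epsilon> E k W') > 0"
  shows "\<exists>i j i' j'. i < k \<and> j < k \<and> i' < k \<and> j' < k \<and> i' \<noteq> j' \<and> W'!i' = W!i \<and> W'!j' = W!j"
proof -
  have "SW E k W \<inter> SW E k W' \<noteq> {}" using cov_zero[OF assms(1,2)] assms(3) by force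
  then obtain i j i' j' where "i<j" "j<k" "i'<j'" "j'<k" "(W!i,W!j) = (W'!i',W'!j')"
    unfolding SW_def Ed_def by auto
  then show ?thesis
    by (intro exI[of _ i] exI[of _ j] exI[of _ i'] exI[of _ j']) auto
qed

definition PP :: "nat \<Rightarrow> nat \<Rightarrow> nat \<times> nat \<times> nat \<times> nat \<Rightarrow> (nat list \<times> nat list) set" where
  "PP n k q = (case q of (i,j,i',j') \<Rightarrow>
     {(W,W'). W \<in> tuples_D n k \<and> W' \<in> tuples_D n k \<and> W'!i' = W!i \<and> W'!j' = W!j})"

lemma finite_tuples_D: "finite (tuples_D n k)"
proof -
  have "tuples_D n k \<subseteq> {xs. set xs \<subseteq> {..<n} \<and> length xs = k}" unfolding tuples_D_def by auto
  then show ?thesis by (rule finite_subset) (rule finite_lists_length_eq, simp)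
qed

lemma finite_PP: "finite (PP n k q)"
proof -
  have "PP n k q \<subseteq> tuples_D n k \<times> tuples_D n k" unfolding PP_def by (cases q) auto
  then show ?thesis by (rule finite_subset) (simp add: finite_tuples_D)
qed

lemma card_PP:
  assumes "i < k" "j < k" "i' < k" "j' < k" "i' \<noteq> j'"
  shows "card (PP n k (i,j,i',j')) \<le> n ^ (2*k-2)"
proof -
  let ?f = "\<lambda>(W::nat list,W'::nat list). (restrict (nth W) {..<k}, restrict (nth W') ({..<k}-{i',j'}))"
  let ?B = "PiE {..<k} (\<lambda>_. {..<n}) \<times> PiE ({..<k}-{i',j'}) (\<lambda>_. {..<n})"
  have inj: "inj_on ?f (PP n k (i,j,i',j'))"
  proof (rule inj_onI, clarify)
    fix W1 W1' W2 W2'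
    assume m1: "(W1,W1') \<in> PP n k (i,j,i',j')" and m2: "(W2,W2') \<in> PP n k (i,j,i',j')"
      and e1: "restrict (nth W1) {..<k} = restrict (nth W2) {..<k}"
      and e2: "restrict (nth W1') ({..<k}-{i',j'}) = restrict (nth W2') ({..<k}-{i',j'})"
    from m1 m2 have l: "length W1 = k" "length W2 = k" "length W1' = k" "length W2' = k"
      and c: "W1'!i' = W1!i" "W1'!j' = W1!j" "W2'!i' = W2!i" "W2'!j' = W2!j"
      unfolding PP_def tuples_D_def by auto
    have a: "W1!t = W2!t" if "t < k" for t using e1 that by (metis lessThan_iff restrict_apply')
    have "W1 = W2" using l a by (intro nth_equalityI) auto
    moreover have "W1'!t = W2'!t" if "t < k" for t
    proof (cases "t = i' \<or> t = j'")
      case True then show ?thesis using c a assms by auto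
    next
      case False then have "t \<in> {..<k}-{i',j'}" using that by auto
      then show ?thesis using e2 by (metis restrict_apply')
    qed
    then have "W1' = W2'" using l by (intro nth_equalityI) auto
    ultimately show "W1 = W2 \<and> W1' = W2'" by simp
  qed
  have img0: "?f (W,W') \<in> ?B" if "(W,W') \<in> PP n k (i,j,i',j')" for W W'
  proof -
    from that
    have "length W = k" "length W' = k" "set W \<subseteq> {..<n}" "set W' \<subseteq> {..<n}"
      unfolding PP_def tuples_D_def by auto
    then have "\<forall>t<k. W!t < n" "\<forall>t<k. W'!t < n" by (metis lessThan_iff nth_mem subsetD)+
    then show "?f (W,W') \<in> ?B" by (auto simp: PiE_def Pi_def)
  qed
  have img: "?f ` PP n k (i,j,i',j') \<subseteq> ?B"
  proof (rule image_subsetI)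
    fix z assume "z \<in> PP n k (i,j,i',j')"
    then show "?f z \<in> ?B" using img0[of "fst z" "snd z"] by (metis prod.collapse)
  qed
  have fB: "finite ?B" by (intro finite_cartesian_product finite_PiE) auto
  have "card (PP n k (i,j,i',j')) \<le> card ?B" by (rule card_inj_on_le[OF inj img fB])
  also have "card ?B = n ^ k * n ^ (k - 2)"
  proof -
    have "card ({..<k::nat} - {i',j'}) = k - 2"
      using assms by (subst card_Diff_subset) auto
    then show ?thesis by (simp add: card_cartesian_product card_PiE)
  qed
  also have "\<dots> = n ^ (2*k-2)"
    using assms by (simp add: power_add[symmetric]) (intro arg_cong[where f="\<lambda>m. n ^ m"], linarith)
  finally show ?thesis .
qed

theorem lemma3:
  fixes k :: nat
  assumes "k \<ge> 2"
  shows "\<exists>C::real. \<forall>\<epsilon>::real. \<forall>E n a. \<epsilon> > 0 \<longrightarrow> simple_graph_on k E \<longrightarrow> simple_graph_on n a \<longrightarrow>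
     real (card {(W, W'). W \<in> tuples_D n k \<and> W' \<in> tuples_D n k \<and>
        cov_pmf (rr_pmf \<epsilon> n a) (W_tilde \<epsilon> E k W) (W_tilde \<epsilon> E k W') > 0})
     \<le> C * real n ^ (2 * k - 2)"
proof (intro exI[of _ "real k ^ 4"] allI impI)
  fix \<epsilon> :: real and E n a
  let ?S = "{(W, W'). W \<in> tuples_D n k \<and> W' \<in> tuples_D n k \<and>
        cov_pmf (rr_pmf \<epsilon> n a) (W_tilde \<epsilon> E k W) (W_tilde \<epsilon> E k W') > 0}"
  let ?Q = "{(i,j,i',j'). i < k \<and> j < k \<and> i' < k \<and> j' < k \<and> i' \<noteq> j'}"
  have Qsub: "?Q \<subseteq> {..<k} \<times> {..<k} \<times> {..<k} \<times> {..<k}" by auto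
  have fQ: "finite ?Q" by (rule finite_subset[OF Qsub]) auto
  have cQ: "card ?Q \<le> k ^ 4"
  proof -
    have "card ?Q \<le> card ({..<k} \<times> {..<k} \<times> {..<k} \<times> {..<k})" by (rule card_mono[OF _ Qsub]) auto
    also have "\<dots> = k ^ 4" by (simp add: card_cartesian_product power4_eq_xxxx)
    finally show ?thesis .
  qed
  have sub: "?S \<subseteq> (\<Union>q\<in>?Q. PP n k q)"
  proof clarify
    fix W W' assume h: "W \<in> tuples_D n k" "W' \<in> tuples_D n k"
      "cov_pmf (rr_pmf \<epsilon> n a) (W_tilde \<epsilon> E k W) (W_tilde \<epsilon> E k W') > 0"
    from cov_pos_share[OF h] obtain i j i' j' where
      "i < k \<and> j < k \<and> i' < k \<and> j' < k \<and> i' \<noteq> j' \<and> W'!i' = W!i \<and> W'!j' = W!j" by blast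
    then show "(W,W') \<in> (\<Union>q\<in>?Q. PP n k q)" using h unfolding PP_def
      by (intro UN_I[of "(i,j,i',j')"]) auto
  qed
  have "card ?S \<le> card (\<Union>q\<in>?Q. PP n k q)"
    by (rule card_mono[OF _ sub]) (use fQ finite_PP in auto)
  also have "\<dots> \<le> (\<Sum>q\<in>?Q. card (PP n k q))" by (rule card_UN_le[OF fQ])
  also have "\<dots> \<le> (\<Sum>q\<in>?Q. n ^ (2*k-2))"
    by (rule sum_mono) (auto intro!: card_PP)
  also have "\<dots> = card ?Q * n ^ (2*k-2)" by simp
  also have "\<dots> \<le> k ^ 4 * n ^ (2*k-2)" using cQ by simp
  finally have "card ?S \<le> k ^ 4 * n ^ (2*k-2)" .
  then have "real (card ?S) \<le> real (k ^ 4 * n ^ (2*k-2))" by linarith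
  then show "real (card ?S) \<le> real k ^ 4 * real n ^ (2 * k - 2)" by simp
qed

end
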